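(* Let $\mathbb{F}$ be a finite field of odd characteristic, $\psi$ a nontrivial additive character on $\mathbb{F}$ (with values in $\mathbb{Q}(\zeta_p)$), and $\lambda$ the quadratic character of $\mathbb{F}^\times$ extended by $\lambda(0)=0$. For $\gamma\in\mathbb{F}^\times$ and $\beta\in\mathbb{F}$ let $$M_{\mathbb{F}}(\beta,\gamma)=\sum_{x\in\mathbb{F}}\sum_{z\in\mathbb{F}}\lambda\big(x(x+16\gamma)(x+z^2)\big)\psi(\beta z).$$ Then $M_{\mathbb{F}}(\beta,\gamma)=1$ if $\beta=0$, and $M_{\mathbb{F}}(\beta,\gamma)=\mathrm{Kl}_{\mathbb{F}}(\psi;\gamma\beta^2)^2-|\mathbb{F}|$ if $\beta\neq0$.
   Context: For $\alpha\in\mathbb{F}^\times$, the (sign-normalised) Kloosterman sum is $\mathrm{Kl}_{\mathbb{F}}(\psi;\alpha)=-\sum_{x\in\mathbb{F}^\times}\psi(x+\alpha/x)$. *)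

theory Defs
  imports Complex_Main
begin

definition additive_char :: "('a::field \<Rightarrow> complex) \<Rightarrow> bool" where
  "additive_char \<psi> \<longleftrightarrow> \<psi> 0 = 1 \<and> (\<forall>x y. \<psi> (x + y) = \<psi> x * \<psi> y)"

definition nontrivial_additive_char :: "('a::field \<Rightarrow> complex) \<Rightarrow> bool" where
  "nontrivial_additive_char \<psi> \<longleftrightarrow> additive_char \<psi> \<and> (\<exists>x. \<psi> x \<noteq> 1)"

definition quad_char :: "'a::field \<Rightarrow> complex" where
  "quad_char x = (if x = 0 then 0 else if (\<exists>y. y ^ 2 = x) then 1 else -1)"

text \<open>Sign-normalised Kloosterman sum.\<close>
definition kloosterman :: "('a::{finite,field} \<Rightarrow> complex) \<Rightarrow> 'a \<Rightarrow> complex" where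
  "kloosterman \<psi> \<alpha> = - (\<Sum>x\<in>{x::'a. x \<noteq> 0}. \<psi> (x + \<alpha> / x))"

definition M_sum :: "('a::{finite,field} \<Rightarrow> complex) \<Rightarrow> 'a \<Rightarrow> 'a \<Rightarrow> complex" where
  "M_sum \<psi> \<beta> \<gamma> = (\<Sum>x\<in>(UNIV::'a set). \<Sum>z\<in>(UNIV::'a set).
      quad_char (x * (x + 16 * \<gamma>) * (x + z ^ 2)) * \<psi> (\<beta> * z))"

end

theory Submission
  imports Defs
begin


lemma two_nz:
  assumes "odd CHAR('a::field)"
  shows "(2::'a) \<noteq> 0"
proof
  assume "(2::'a) = 0"
  hence "of_nat 2 = (0::'a)" by simp
  hence "CHAR('a) dvd 2" by (simp only: of_nat_eq_0_iff_char_dvd)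
  hence "CHAR('a) \<le> 2" by (rule dvd_imp_le) auto
  moreover have "\<And>c::nat. odd c \<Longrightarrow> c \<le> 2 \<Longrightarrow> c = 1" by presburger
  ultimately have "CHAR('a) = 1" using assms by blast
  thus False using CHAR_not_1 by simp
qed

definition issq :: "'a::field \<Rightarrow> bool" where "issq x \<longleftrightarrow> (\<exists>y. y ^ 2 = x)"

lemma quad_char_alt: "quad_char x = (if x = 0 then 0 else if issq x then 1 else -1)"
  by (simp add: quad_char_def issq_def)

lemma card_sqrt_nz:
  fixes s :: "'a::{finite,field}"
  assumes two: "(2::'a) \<noteq> 0" and "s \<noteq> 0" "issq s"
  shows "card {y. y ^ 2 = s} = 2"
proof -
  obtain y0 where y0: "y0 ^ 2 = s" using assms unfolding issq_def by blast
  have "y0 \<noteq> 0" using y0 assms by auto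
  have ne: "y0 \<noteq> - y0"
  proof
    assume h: "y0 = - y0"
    have "y0 + y0 = 0" by (subst (2) h) simp
    hence "2 * y0 = 0" by (simp only: mult_2)
    thus False using two \<open>y0 \<noteq> 0\<close> by simp
  qed
  have "{y. y ^ 2 = s} = {y0, -y0}" by (auto simp: power2_eq_iff y0[symmetric])
  thus ?thesis using ne by simp
qed

lemma card_sqrt:
  fixes u :: "'a::{finite,field}"
  assumes two: "(2::'a) \<noteq> 0"
  shows "of_nat (card {y. y ^ 2 = u}) = 1 + quad_char u"
proof (cases "u = 0")
  case True
  hence "{y. y ^ 2 = u} = {0}" by auto
  thus ?thesis using True by (simp add: quad_char_def)
next
  case False
  show ?thesis
  proof (cases "issq u")
    case True
    thus ?thesis using card_sqrt_nz[OF two False True] False by (simp add: quad_char_alt)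
  next
    case F2: False
    hence "{y. y ^ 2 = u} = {}" unfolding issq_def by auto
    thus ?thesis using False F2 by (simp add: quad_char_alt)
  qed
qed

lemma card_nz_sq:
  fixes dummy :: "'a::{finite,field}"
  assumes two: "(2::'a) \<noteq> 0"
  shows "card {x::'a. x \<noteq> 0} = 2 * card {x::'a. x \<noteq> 0 \<and> issq x}"
proof -
  have "card {x::'a. x \<noteq> 0} = (\<Sum>s\<in>{x::'a. x \<noteq> 0 \<and> issq x}. card {y. y \<in> {x::'a. x \<noteq> 0} \<and> y ^ 2 = s})"
  proof -
    have sub: "(\<lambda>y. y ^ 2) ` {x::'a. x \<noteq> 0} \<subseteq> {x::'a. x \<noteq> 0 \<and> issq x}"
      by (auto simp: issq_def)
    show ?thesis
      using sum.group[OF _ _ sub, of "\<lambda>_. 1::nat"] by simp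
  qed
  also have "\<dots> = (\<Sum>s\<in>{x::'a. x \<noteq> 0 \<and> issq x}. 2)"
  proof (rule sum.cong)
    fix s assume "s \<in> {x::'a. x \<noteq> 0 \<and> issq x}"
    hence "s \<noteq> 0" "issq s" by auto
    hence "{y. y \<in> {x::'a. x \<noteq> 0} \<and> y ^ 2 = s} = {y. y ^ 2 = s}" by auto
    thus "card {y. y \<in> {x::'a. x \<noteq> 0} \<and> y ^ 2 = s} = 2"
      using card_sqrt_nz[OF two \<open>s \<noteq> 0\<close> \<open>issq s\<close>] by simp
  qed simp
  finally show ?thesis by simp
qed

lemma card_sq_nsq:
  fixes dummy :: "'a::{finite,field}"
  assumes two: "(2::'a) \<noteq> 0"
  shows "card {x::'a. x \<noteq> 0 \<and> \<not> issq x} = card {x::'a. x \<noteq> 0 \<and> issq x}"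
proof -
  have "{x::'a. x \<noteq> 0} = {x::'a. x \<noteq> 0 \<and> issq x} \<union> {x::'a. x \<noteq> 0 \<and> \<not> issq x}" by auto
  hence "card {x::'a. x \<noteq> 0} = card {x::'a. x \<noteq> 0 \<and> issq x} + card {x::'a. x \<noteq> 0 \<and> \<not> issq x}"
    by (metis (no_types, lifting) card_Un_disjoint disjoint_iff finite mem_Collect_eq)
  thus ?thesis using card_nz_sq[OF two] by simp
qed

lemma nsq_image:
  fixes n :: "'a::{finite,field}"
  assumes two: "(2::'a) \<noteq> 0" and n: "n \<noteq> 0" "\<not> issq n"
  shows "(\<lambda>s::'a. n * s) ` {x::'a. x \<noteq> 0 \<and> issq x} = {x::'a. x \<noteq> 0 \<and> \<not> issq x}"
proof (rule card_subset_eq)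
  show "finite {x::'a. x \<noteq> 0 \<and> \<not> issq x}" by simp
  show "(\<lambda>s::'a. n * s) ` {x::'a. x \<noteq> 0 \<and> issq x} \<subseteq> {x::'a. x \<noteq> 0 \<and> \<not> issq x}"
  proof
    fix t assume "t \<in> (\<lambda>s::'a. n * s) ` {x::'a. x \<noteq> 0 \<and> issq x}"
    then obtain s where s: "s \<noteq> 0" "issq s" and t: "t = n * s" by auto
    have "\<not> issq (n * s)"
    proof
      assume "issq (n * s)"
      then obtain c where c: "c ^ 2 = n * s" unfolding issq_def by blast
      obtain a where a: "a ^ 2 = s" using s unfolding issq_def by blast
      have "a \<noteq> 0" using a s by auto
      have "(c / a) ^ 2 = n" using c a \<open>a \<noteq> 0\<close> s by (simp add: power_divide)
      thus False using n unfolding issq_def by blast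
    qed
    thus "t \<in> {x::'a. x \<noteq> 0 \<and> \<not> issq x}" using t s n by simp
  qed
  have "inj_on (\<lambda>s::'a. n * s) {x::'a. x \<noteq> 0 \<and> issq x}" using n by (auto intro: inj_onI)
  thus "card ((\<lambda>s::'a. n * s) ` {x::'a. x \<noteq> 0 \<and> issq x}) = card {x::'a. x \<noteq> 0 \<and> \<not> issq x}"
    using card_sq_nsq[OF two] by (simp add: card_image)
qed

lemma nsq_mult:
  fixes n m :: "'a::{finite,field}"
  assumes two: "(2::'a) \<noteq> 0" and n: "n \<noteq> 0" "\<not> issq n" and m: "m \<noteq> 0" "\<not> issq m"
  shows "issq (n * m)"
proof -
  have "m \<in> (\<lambda>s::'a. n * s) ` {x::'a. x \<noteq> 0 \<and> issq x}" using nsq_image[OF two n] m by auto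
  then obtain s where "m = n * s" "issq s" by auto
  then obtain a where "m = n * a ^ 2" unfolding issq_def by blast
  hence "n * m = (n * a) ^ 2" by (simp add: power2_eq_square)
  thus ?thesis unfolding issq_def by (intro exI[of _ "n*a"]) simp
qed

lemma quad_char_mult:
  fixes x y :: "'a::{finite,field}"
  assumes two: "(2::'a) \<noteq> 0"
  shows "quad_char (x * y) = quad_char x * quad_char y"
proof (cases "x = 0 \<or> y = 0")
  case True thus ?thesis by (auto simp: quad_char_alt)
next
  case False
  hence x: "x \<noteq> 0" and y: "y \<noteq> 0" by auto
  have ss: "issq x \<Longrightarrow> issq y \<Longrightarrow> issq (x * y)" unfolding issq_def
    by (metis power_mult_distrib)
  have sn: "issq a \<Longrightarrow> a \<noteq> 0 \<Longrightarrow> \<not> issq b \<Longrightarrow> \<not> issq (a * b)" for a b :: 'a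
  proof
    assume "issq a" "a \<noteq> 0" "\<not> issq b" "issq (a * b)"
    then obtain c d where c: "c ^ 2 = a" and d: "d ^ 2 = a * b" unfolding issq_def by blast
    have "c \<noteq> 0" using c \<open>a \<noteq> 0\<close> by auto
    have "(d / c) ^ 2 = b" using c d \<open>a \<noteq> 0\<close> by (simp add: power_divide)
    thus False using \<open>\<not> issq b\<close> unfolding issq_def by blast
  qed
  show ?thesis
  proof (cases "issq x")
    case True
    show ?thesis
    proof (cases "issq y")
      case True
      thus ?thesis using \<open>issq x\<close> x y ss by (simp add: quad_char_alt)
    next
      case False
      thus ?thesis using \<open>issq x\<close> x y sn[of x y] by (simp add: quad_char_alt)
    qed
  next
    case False
    show ?thesis
    proof (cases "issq y")
      case True
      hence "\<not> issq (y * x)" using False x y sn[of y x] by simp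
      thus ?thesis using True False x y by (simp add: quad_char_alt mult.commute)
    next
      case F2: False
      thus ?thesis using False x y nsq_mult[OF two x False y F2] by (simp add: quad_char_alt)
    qed
  qed
qed



lemma sum_bij_UNIV:
  fixes f g :: "'a::finite \<Rightarrow> 'a" and h :: "'a \<Rightarrow> 'b::comm_monoid_add"
  assumes "\<And>x. g (f x) = x" "\<And>x. f (g x) = x"
  shows "(\<Sum>x\<in>UNIV. h (f x)) = (\<Sum>x\<in>UNIV. h x)"
  by (rule sum.reindex_bij_witness[where i=g and j=f]) (auto simp: assms)

lemma sum_shift: "(\<Sum>x\<in>UNIV. h (x + c)) = (\<Sum>x\<in>(UNIV::'a::{finite,ab_group_add} set). h x)"
  by (rule sum_bij_UNIV[where g="\<lambda>x. x - c"]) auto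

lemma sum_scale:
  fixes c :: "'a::{finite,field}"
  assumes "c \<noteq> 0"
  shows "(\<Sum>x\<in>UNIV. h (c * x)) = (\<Sum>x\<in>UNIV. h x)"
  by (rule sum_bij_UNIV[where g="\<lambda>x. x / c"]) (use assms in auto)

lemma sum_nz:
  fixes f :: "'a::{finite,zero} \<Rightarrow> 'b::comm_monoid_add"
  assumes "f 0 = 0"
  shows "(\<Sum>x\<in>UNIV. f x) = (\<Sum>x\<in>{x. x \<noteq> 0}. f x)"
proof -
  have "UNIV = insert 0 {x::'a. x \<noteq> 0}" by auto
  hence "(\<Sum>x\<in>UNIV. f x) = (\<Sum>x\<in>insert 0 {x::'a. x \<noteq> 0}. f x)" by simp
  also have "\<dots> = (\<Sum>x\<in>{x. x \<noteq> 0}. f x)" using assms by (subst sum.insert) auto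
  finally show ?thesis .
qed

lemma sum_ne:
  fixes f :: "'a::finite \<Rightarrow> 'b::ab_group_add"
  shows "(\<Sum>x\<in>{x. x \<noteq> c}. f x) = (\<Sum>x\<in>UNIV. f x) - f c"
proof -
  have "(\<Sum>x\<in>UNIV. f x) = f c + (\<Sum>x\<in>UNIV - {c}. f x)" by (rule sum.remove) auto
  moreover have "UNIV - {c} = {x. x \<noteq> c}" by auto
  ultimately show ?thesis by simp
qed

lemma sum_fiber:
  fixes g :: "'a::finite \<Rightarrow> 'b::finite" and f :: "'b \<Rightarrow> 'c::comm_semiring_1"
  shows "(\<Sum>x\<in>UNIV. f (g x)) = (\<Sum>w\<in>UNIV. of_nat (card {x. g x = w}) * f w)"
proof -
  have "(\<Sum>x\<in>UNIV. f (g x)) = (\<Sum>w\<in>UNIV. \<Sum>x\<in>{x. x \<in> UNIV \<and> g x = w}. f (g x))"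
    by (rule sum.group[symmetric]) auto
  also have "\<dots> = (\<Sum>w\<in>UNIV. \<Sum>x\<in>{x. g x = w}. f w)" by (intro sum.cong) auto
  also have "\<dots> = (\<Sum>w\<in>UNIV. of_nat (card {x. g x = w}) * f w)" by simp
  finally show ?thesis .
qed

lemma quad_sq: "x \<noteq> 0 \<Longrightarrow> quad_char (x ^ 2) = 1"
  by (auto simp: quad_char_def)

lemma quad_mult_sq:
  fixes u t :: "'a::{finite,field}"
  assumes two: "(2::'a) \<noteq> 0" and "t \<noteq> 0"
  shows "quad_char (u * t ^ 2) = quad_char u"
  using assms by (simp add: quad_char_mult[OF two] quad_sq)

lemma exists_nsq:
  fixes dummy :: "'a::{finite,field}"
  assumes two: "(2::'a) \<noteq> 0"
  shows "\<exists>n::'a. n \<noteq> 0 \<and> \<not> issq n"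
proof -
  have "(1::'a) \<in> {x::'a. x \<noteq> 0 \<and> issq x}" by (auto simp: issq_def intro: exI[of _ 1])
  hence ne: "{x::'a. x \<noteq> 0 \<and> issq x} \<noteq> {}" by blast
  have "card {x::'a. x \<noteq> 0 \<and> issq x} > 0" using ne by (simp add: card_gt_0_iff)
  hence "card {x::'a. x \<noteq> 0 \<and> \<not> issq x} > 0" using card_sq_nsq[OF two] by simp
  thus ?thesis by (auto simp: card_gt_0_iff)
qed

lemma sum_quad:
  fixes dummy :: "'a::{finite,field}"
  assumes two: "(2::'a) \<noteq> 0"
  shows "(\<Sum>x\<in>(UNIV::'a set). quad_char x) = 0"
proof -
  obtain n :: 'a where n: "n \<noteq> 0" "\<not> issq n" using exists_nsq[OF two] by blast
  have "(\<Sum>x\<in>(UNIV::'a set). quad_char x) = (\<Sum>x\<in>UNIV. quad_char (n * x))"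
    using sum_scale[OF n(1), of quad_char] by simp
  also have "\<dots> = quad_char n * (\<Sum>x\<in>(UNIV::'a set). quad_char x)"
    by (simp add: quad_char_mult[OF two] sum_distrib_left)
  also have "quad_char n = -1" using n by (simp add: quad_char_alt)
  finally show ?thesis by simp
qed

lemma sum_quad_shift:
  fixes c :: "'a::{finite,field}"
  assumes two: "(2::'a) \<noteq> 0"
  shows "(\<Sum>x\<in>UNIV. quad_char (x + c)) = 0"
  using sum_shift[of quad_char c] sum_quad[OF two] by simp

lemma sum_psi0:
  fixes \<psi> :: "'a::{finite,field} \<Rightarrow> complex"
  assumes "nontrivial_additive_char \<psi>"
  shows "(\<Sum>x\<in>UNIV. \<psi> x) = 0"
proof -
  obtain t where t: "\<psi> t \<noteq> 1" and ad: "\<And>x y. \<psi> (x + y) = \<psi> x * \<psi> y"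
    using assms unfolding nontrivial_additive_char_def additive_char_def by blast
  have "(\<Sum>x\<in>UNIV. \<psi> x) = (\<Sum>x\<in>UNIV. \<psi> (x + t))" using sum_shift[of \<psi> t] by simp
  also have "\<dots> = \<psi> t * (\<Sum>x\<in>UNIV. \<psi> x)" by (simp add: ad sum_distrib_left mult.commute)
  finally have "(1 - \<psi> t) * (\<Sum>x\<in>UNIV. \<psi> x) = 0" by (simp add: algebra_simps)
  thus ?thesis using t by simp
qed

lemma sum_psi:
  fixes \<psi> :: "'a::{finite,field} \<Rightarrow> complex"
  assumes "nontrivial_additive_char \<psi>"
  shows "(\<Sum>x\<in>UNIV. \<psi> (c * x)) = (if c = 0 then of_nat (card (UNIV::'a set)) else 0)"
proof (cases "c = 0")
  case True
  have "\<psi> 0 = 1" using assms unfolding nontrivial_additive_char_def additive_char_def by blast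
  thus ?thesis using True by simp
next
  case False
  thus ?thesis using sum_scale[OF False, of \<psi>] sum_psi0[OF assms] by simp
qed

lemma lemma4:
  fixes b :: "'a::{finite,field}"
  assumes two: "(2::'a) \<noteq> 0" and b: "b \<noteq> 0"
  shows "(\<Sum>x\<in>UNIV. quad_char (x * (x + b))) = -1"
proof -
  have "(\<Sum>x\<in>UNIV. quad_char (x * (x + b))) = (\<Sum>x\<in>{x. x \<noteq> 0}. quad_char (x * (x + b)))"
    by (rule sum_nz) (simp add: quad_char_def)
  also have "\<dots> = (\<Sum>x\<in>{x. x \<noteq> 0}. quad_char (1 + b / x))"
  proof (rule sum.cong)
    fix x :: 'a assume "x \<in> {x. x \<noteq> 0}"
    hence x: "x \<noteq> 0" by simp
    have "x * (x + b) = (1 + b / x) * x ^ 2" using x by (simp add: field_simps power2_eq_square)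
    thus "quad_char (x * (x + b)) = quad_char (1 + b / x)"
      using quad_mult_sq[OF two x] by simp
  qed simp
  also have "\<dots> = (\<Sum>u\<in>{u::'a. u \<noteq> 1}. quad_char u)"
  proof (rule sum.reindex_bij_witness[of "{x. x \<noteq> 0}" "\<lambda>u. b / (u - 1)" "\<lambda>x. 1 + b / x" "{u. u \<noteq> 1}" quad_char])
    fix x :: 'a assume "x \<in> {x. x \<noteq> 0}"
    hence x: "x \<noteq> 0" by simp
    show "b / (1 + b / x - 1) = x" using x b by simp
    show "1 + b / x \<in> {u. u \<noteq> 1}" using x b by simp
    show "quad_char (1 + b / x) = quad_char (1 + b / x)" by simp
  next
    fix u :: 'a assume "u \<in> {u. u \<noteq> 1}"
    hence u: "u - 1 \<noteq> 0" by simp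
    show "1 + b / (b / (u - 1)) = u" using u b by simp
    show "b / (u - 1) \<in> {x. x \<noteq> 0}" using u b by simp
  qed
  also have "\<dots> = -1" using sum_ne[where f="quad_char :: 'a \<Rightarrow> complex" and c=1] sum_quad[OF two] quad_sq[of "1::'a"]
    by simp
  finally show ?thesis .
qed

lemma lemma5:
  fixes d :: "'a::{finite,field}"
  assumes two: "(2::'a) \<noteq> 0" and d: "d \<noteq> 0"
  shows "(\<Sum>s\<in>UNIV. quad_char (s ^ 2 + d)) = -1"
proof -
  have "(\<Sum>s\<in>UNIV. quad_char (s ^ 2 + d)) = (\<Sum>u\<in>UNIV. of_nat (card {s::'a. s ^ 2 = u}) * quad_char (u + d))"
    using sum_fiber[of "\<lambda>u. quad_char (u + d)" "\<lambda>s::'a. s ^ 2"] by simp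
  also have "\<dots> = (\<Sum>u\<in>UNIV. quad_char (u + d) + quad_char (u * (u + d)))"
    by (intro sum.cong) (simp_all add: card_sqrt[OF two] quad_char_mult[OF two] distrib_right)
  also have "\<dots> = -1"
    by (simp add: sum.distrib sum_quad_shift[OF two] lemma4[OF two d])
  finally show ?thesis .
qed

lemma quad_eq_iff:
  fixes p b c :: "'a::field"
  assumes two: "(2::'a) \<noteq> 0"
  shows "p ^ 2 + b * p + c = 0 \<longleftrightarrow> (2 * p + b) ^ 2 = b ^ 2 - 4 * c"
proof -
  have "(2 * p + b) ^ 2 - (b ^ 2 - 4 * c) = 4 * (p ^ 2 + b * p + c)"
    by (simp add: algebra_simps power2_eq_square)
  moreover have "(4::'a) \<noteq> 0" using two by (metis mult_2 mult_eq_0_iff numeral_Bit0 numeral_One one_add_one)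
  ultimately show ?thesis by (metis eq_iff_diff_eq_0 mult_eq_0_iff)
qed

lemma card_quad_roots:
  fixes b c :: "'a::{finite,field}"
  assumes two: "(2::'a) \<noteq> 0"
  shows "of_nat (card {p. p ^ 2 + b * p + c = 0}) = 1 + quad_char (b ^ 2 - 4 * c)"
proof -
  have eq: "{p. p ^ 2 + b * p + c = 0} = (\<lambda>u. (u - b) / 2) ` {u. u ^ 2 = b ^ 2 - 4 * c}"
  proof (rule set_eqI)
    fix p
    show "p \<in> {p. p ^ 2 + b * p + c = 0} \<longleftrightarrow> p \<in> (\<lambda>u. (u - b) / 2) ` {u. u ^ 2 = b ^ 2 - 4 * c}"
    proof
      assume "p \<in> {p. p ^ 2 + b * p + c = 0}"
      hence "(2*p+b)^2 = b^2 - 4*c" using quad_eq_iff[OF two] by simp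
      moreover have "p = ((2*p+b) - b)/2" using two by simp
      ultimately show "p \<in> (\<lambda>u. (u - b) / 2) ` {u. u ^ 2 = b ^ 2 - 4 * c}" by blast
    next
      assume "p \<in> (\<lambda>u. (u - b) / 2) ` {u. u ^ 2 = b ^ 2 - 4 * c}"
      then obtain u where u: "u^2 = b^2-4*c" "p = (u-b)/2" by auto
      hence "2*p = u-b" using two by (simp add: mult.commute)
      hence "2*p+b = u" by (metis diff_add_cancel)
      hence "(2*p+b)^2 = b^2-4*c" using u(1) by simp
      thus "p \<in> {p. p ^ 2 + b * p + c = 0}" using quad_eq_iff[OF two, of p b c] by simp
    qed
  qed
  have "inj (\<lambda>u::'a. (u - b) / 2)" using two by (auto intro: injI)
  hence "card {p. p ^ 2 + b * p + c = 0} = card {u. u ^ 2 = b ^ 2 - 4 * c}"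
    unfolding eq by (simp add: card_image inj_on_subset)
  thus ?thesis using card_sqrt[OF two] by simp
qed



lemma sum_fiber_on:
  fixes g :: "'a \<Rightarrow> 'b::finite" and f :: "'b \<Rightarrow> 'c::comm_semiring_1"
  assumes "finite A"
  shows "(\<Sum>x\<in>A. f (g x)) = (\<Sum>w\<in>UNIV. of_nat (card {x\<in>A. g x = w}) * f w)"
proof -
  have "(\<Sum>x\<in>A. f (g x)) = (\<Sum>w\<in>UNIV. \<Sum>x\<in>{x. x \<in> A \<and> g x = w}. f (g x))"
    by (rule sum.group[symmetric]) (use assms in auto)
  also have "\<dots> = (\<Sum>w\<in>UNIV. \<Sum>x\<in>{x\<in>A. g x = w}. f w)" by (intro sum.cong) auto
  also have "\<dots> = (\<Sum>w\<in>UNIV. of_nat (card {x\<in>A. g x = w}) * f w)" by simp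
  finally show ?thesis .
qed

lemma pair_card:
  fixes s p :: "'a::{finite,field}"
  assumes two: "(2::'a) \<noteq> 0"
  shows "of_nat (card {P \<in> {x::'a. x \<noteq> 0} \<times> {x. x \<noteq> 0}. (fst P + snd P, fst P * snd P) = (s, p)})
     = (if p = 0 then 0 else 1 + quad_char (s ^ 2 - 4 * p))"
proof (cases "p = 0")
  case True
  hence "{P \<in> {x::'a. x \<noteq> 0} \<times> {x. x \<noteq> 0}. (fst P + snd P, fst P * snd P) = (s, p)} = {}" by auto
  thus ?thesis using True by simp
next
  case False
  have eq: "{P \<in> {x::'a. x \<noteq> 0} \<times> {x. x \<noteq> 0}. (fst P + snd P, fst P * snd P) = (s, p)}
      = (\<lambda>x. (x, s - x)) ` {x. x ^ 2 + (- s) * x + p = 0}"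
  proof (rule set_eqI)
    fix P :: "'a \<times> 'a"
    obtain x y where P: "P = (x, y)" by (cases P)
    show "P \<in> {P \<in> {x::'a. x \<noteq> 0} \<times> {x. x \<noteq> 0}. (fst P + snd P, fst P * snd P) = (s, p)} \<longleftrightarrow>
          P \<in> (\<lambda>x. (x, s - x)) ` {x. x ^ 2 + (- s) * x + p = 0}"
    proof
      assume "P \<in> {P \<in> {x::'a. x \<noteq> 0} \<times> {x. x \<noteq> 0}. (fst P + snd P, fst P * snd P) = (s, p)}"
      hence h: "x + y = s" "x * y = p" using P by auto
      hence "x ^ 2 + (- s) * x + p = 0" by (auto simp: power2_eq_square algebra_simps)
      moreover have "y = s - x" using h by auto
      ultimately show "P \<in> (\<lambda>x. (x, s - x)) ` {x. x ^ 2 + (- s) * x + p = 0}" using P by auto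
    next
      assume "P \<in> (\<lambda>x. (x, s - x)) ` {x. x ^ 2 + (- s) * x + p = 0}"
      then obtain u where u: "u ^ 2 + (- s) * u + p = 0" "P = (u, s - u)" by auto
      have prod: "u * (s - u) = p" using u(1) by (simp add: power2_eq_square algebra_simps add_eq_0_iff2)
      hence "u \<noteq> 0" "s - u \<noteq> 0" using False by auto
      thus "P \<in> {P \<in> {x::'a. x \<noteq> 0} \<times> {x. x \<noteq> 0}. (fst P + snd P, fst P * snd P) = (s, p)}"
        using u(2) prod by simp
    qed
  qed
  have "inj (\<lambda>x::'a. (x, s - x))" by (auto intro: injI)
  hence "card {P \<in> {x::'a. x \<noteq> 0} \<times> {x. x \<noteq> 0}. (fst P + snd P, fst P * snd P) = (s, p)}
        = card {x. x ^ 2 + (- s) * x + p = 0}"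
    unfolding eq by (simp add: card_image inj_on_subset)
  thus ?thesis using card_quad_roots[OF two, of "- s" p] False by simp
qed


lemma psi_props:
  assumes "nontrivial_additive_char \<psi>"
  shows "\<psi> 0 = 1" "\<psi> (x + y) = \<psi> x * \<psi> y"
  using assms unfolding nontrivial_additive_char_def additive_char_def by auto

lemma kl_sq:
  fixes \<psi> :: "'a::{finite,field} \<Rightarrow> complex" and a :: 'a
  assumes two: "(2::'a) \<noteq> 0" and nt: "nontrivial_additive_char \<psi>" and a: "a \<noteq> 0"
  shows "(kloosterman \<psi> a) ^ 2 = of_nat (card (UNIV::'a set))
     + (\<Sum>p\<in>{p::'a. p \<noteq> 0}. \<Sum>s\<in>UNIV. quad_char (s ^ 2 - 4 * p) * \<psi> (s * ((p + a) / p)))"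
proof -
  define NZ where "NZ = {x::'a. x \<noteq> 0}"
  define F where "F = (\<lambda>w::'a \<times> 'a. \<psi> (fst w * ((snd w + a) / snd w)))"
  have "(kloosterman \<psi> a) ^ 2 = (\<Sum>x\<in>NZ. \<Sum>y\<in>NZ. \<psi> (x + a / x) * \<psi> (y + a / y))"
    unfolding kloosterman_def NZ_def by (simp add: power2_eq_square sum_product)
  also have "\<dots> = (\<Sum>x\<in>NZ. \<Sum>y\<in>NZ. F (x + y, x * y))"
  proof (intro sum.cong refl)
    fix x y assume "x \<in> NZ" "y \<in> NZ"
    hence x: "x \<noteq> 0" and y: "y \<noteq> 0" unfolding NZ_def by auto
    have "x + a / x + (y + a / y) = (x + y) * ((x * y + a) / (x * y))"
      using x y by (simp add: field_simps)
    thus "\<psi> (x + a / x) * \<psi> (y + a / y) = F (x + y, x * y)"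
      unfolding F_def using psi_props(2)[OF nt, of "x + a / x" "y + a / y"] by simp
  qed
  also have "\<dots> = (\<Sum>P\<in>NZ \<times> NZ. F (fst P + snd P, fst P * snd P))"
    by (simp add: sum.cartesian_product split_beta)
  also have "\<dots> = (\<Sum>w\<in>UNIV. of_nat (card {P\<in>NZ \<times> NZ. (fst P + snd P, fst P * snd P) = w}) * F w)"
    by (rule sum_fiber_on[where f=F and g="\<lambda>P. (fst P + snd P, fst P * snd P)"]) simp
  also have "\<dots> = (\<Sum>w\<in>UNIV. (if snd w = 0 then 0 else 1 + quad_char ((fst w) ^ 2 - 4 * snd w)) * F w)"
  proof (intro sum.cong refl)
    fix w :: "'a \<times> 'a"
    obtain s p where w: "w = (s, p)" by (cases w)
    show "of_nat (card {P\<in>NZ \<times> NZ. (fst P + snd P, fst P * snd P) = w}) * F w =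
          (if snd w = 0 then 0 else 1 + quad_char ((fst w) ^ 2 - 4 * snd w)) * F w"
      unfolding w NZ_def using pair_card[OF two, of s p] by simp
  qed
  also have "\<dots> = (\<Sum>s\<in>UNIV. \<Sum>p\<in>UNIV. (if p = 0 then 0 else 1 + quad_char (s ^ 2 - 4 * p)) * \<psi> (s * ((p + a) / p)))"
    unfolding F_def by (simp add: sum.cartesian_product split_beta UNIV_Times_UNIV[symmetric] del: UNIV_Times_UNIV)
  also have "\<dots> = (\<Sum>p\<in>UNIV. \<Sum>s\<in>UNIV. (if p = 0 then 0 else 1 + quad_char (s ^ 2 - 4 * p)) * \<psi> (s * ((p + a) / p)))"
    by (rule sum.swap)
  also have "\<dots> = (\<Sum>p\<in>NZ. \<Sum>s\<in>UNIV. (if p = 0 then 0 else 1 + quad_char (s ^ 2 - 4 * p)) * \<psi> (s * ((p + a) / p)))"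
    unfolding NZ_def by (rule sum_nz) simp
  also have "\<dots> = (\<Sum>p\<in>NZ. \<Sum>s\<in>UNIV. \<psi> (s * ((p + a) / p)))
      + (\<Sum>p\<in>NZ. \<Sum>s\<in>UNIV. quad_char (s ^ 2 - 4 * p) * \<psi> (s * ((p + a) / p)))"
    by (simp add: NZ_def distrib_right sum.distrib)
  also have "(\<Sum>p\<in>NZ. \<Sum>s\<in>UNIV. \<psi> (s * ((p + a) / p))) = of_nat (card (UNIV::'a set))"
  proof -
    have "(\<Sum>p\<in>NZ. \<Sum>s\<in>UNIV. \<psi> (s * ((p + a) / p)))
        = (\<Sum>p\<in>NZ. if p = - a then of_nat (card (UNIV::'a set)) else 0)"
    proof (intro sum.cong refl)
      fix p assume "p \<in> NZ"
      hence p: "p \<noteq> 0" unfolding NZ_def by simp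
      have "((p + a) / p = 0) = (p = - a)" using p by (auto simp: add_eq_0_iff2)
      thus "(\<Sum>s\<in>UNIV. \<psi> (s * ((p + a) / p))) = (if p = - a then of_nat (card (UNIV::'a set)) else 0)"
        using sum_psi[OF nt, of "(p + a) / p"] by (simp add: mult.commute)
    qed
    also have "\<dots> = of_nat (card (UNIV::'a set))" using a by (simp add: NZ_def)
    finally show ?thesis .
  qed
  finally show ?thesis unfolding NZ_def .
qed


lemma H_eq_G:
  fixes \<psi> :: "'a::{finite,field} \<Rightarrow> complex"
  assumes two: "(2::'a) \<noteq> 0" and p: "p \<noteq> 0" "p \<noteq> - a" and b: "\<beta> \<noteq> 0"
  shows "(\<Sum>s\<in>UNIV. quad_char (s ^ 2 - 4 * p) * \<psi> (s * ((p + a) / p)))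
       = (\<Sum>z\<in>UNIV. quad_char (z ^ 2 - 4 * ((p + a) ^ 2 / (p * \<beta> ^ 2))) * \<psi> (\<beta> * z))"
proof -
  define t where "t = (p + a) / (p * \<beta>)"
  have pa: "p + a \<noteq> 0" using p by (metis add_eq_0_iff2)
  have t: "t \<noteq> 0" using pa p b by (simp add: t_def)
  have "(\<Sum>z\<in>UNIV. quad_char (z ^ 2 - 4 * ((p + a) ^ 2 / (p * \<beta> ^ 2))) * \<psi> (\<beta> * z))
      = (\<Sum>z\<in>UNIV. quad_char ((t * z) ^ 2 - 4 * ((p + a) ^ 2 / (p * \<beta> ^ 2))) * \<psi> (\<beta> * (t * z)))"
    using sum_scale[OF t, of "\<lambda>z. quad_char (z ^ 2 - 4 * ((p + a) ^ 2 / (p * \<beta> ^ 2))) * \<psi> (\<beta> * z)"]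
    by simp
  also have "\<dots> = (\<Sum>s\<in>UNIV. quad_char (s ^ 2 - 4 * p) * \<psi> (s * ((p + a) / p)))"
  proof (intro sum.cong refl)
    fix z :: 'a
    have e1: "(t * z) ^ 2 - 4 * ((p + a) ^ 2 / (p * \<beta> ^ 2)) = (z ^ 2 - 4 * p) * t ^ 2"
      using p b unfolding t_def by (simp add: field_simps power2_eq_square)
    have e2: "\<beta> * (t * z) = z * ((p + a) / p)"
      using p b unfolding t_def by (simp add: field_simps)
    show "quad_char ((t * z) ^ 2 - 4 * ((p + a) ^ 2 / (p * \<beta> ^ 2))) * \<psi> (\<beta> * (t * z))
        = quad_char (z ^ 2 - 4 * p) * \<psi> (z * ((p + a) / p))"
      unfolding e1 e2 using quad_mult_sq[OF two t] by simp
  qed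
  finally show ?thesis by simp
qed

lemma P_card:
  fixes \<beta> \<gamma> w :: "'a::{finite,field}"
  assumes two: "(2::'a) \<noteq> 0" and b: "\<beta> \<noteq> 0" and g: "\<gamma> \<noteq> 0"
  shows "of_nat (card {p \<in> {p. p \<noteq> 0 \<and> p \<noteq> - (\<gamma> * \<beta> ^ 2)}. (p + \<gamma> * \<beta> ^ 2) ^ 2 / (p * \<beta> ^ 2) = w})
       = (if w = 0 then 0 else 1 + quad_char (w * (w - 4 * \<gamma>)))"
proof -
  define a where "a = \<gamma> * \<beta> ^ 2"
  have a: "a \<noteq> 0" using b g by (simp add: a_def)
  show ?thesis
  proof (cases "w = 0")
    case True
    have "{p \<in> {p. p \<noteq> 0 \<and> p \<noteq> - a}. (p + a) ^ 2 / (p * \<beta> ^ 2) = w} = {}"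
      using True b by (auto simp: add_eq_0_iff2)
    thus ?thesis using True by (simp add: a_def)
  next
    case False
    have eq: "{p \<in> {p. p \<noteq> 0 \<and> p \<noteq> - a}. (p + a) ^ 2 / (p * \<beta> ^ 2) = w}
        = {p. p ^ 2 + (2 * a - w * \<beta> ^ 2) * p + a ^ 2 = 0}"
    proof (rule set_eqI, rule iffI)
      fix p assume "p \<in> {p \<in> {p. p \<noteq> 0 \<and> p \<noteq> - a}. (p + a) ^ 2 / (p * \<beta> ^ 2) = w}"
      hence p: "p \<noteq> 0" and h: "(p + a) ^ 2 / (p * \<beta> ^ 2) = w" by auto
      hence "(p + a) ^ 2 = w * (p * \<beta> ^ 2)" using b by (simp add: field_simps)
      thus "p \<in> {p. p ^ 2 + (2 * a - w * \<beta> ^ 2) * p + a ^ 2 = 0}"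
        by (simp add: power2_eq_square algebra_simps)
    next
      fix p assume "p \<in> {p. p ^ 2 + (2 * a - w * \<beta> ^ 2) * p + a ^ 2 = 0}"
      hence h: "(p + a) ^ 2 = w * (p * \<beta> ^ 2)" by (simp add: power2_eq_square algebra_simps)
      have p0: "p \<noteq> 0"
      proof
        assume "p = 0" thus False using h a by simp
      qed
      have p1: "p \<noteq> - a"
      proof
        assume "p = - a" thus False using h a b False by simp
      qed
      have "(p + a) ^ 2 / (p * \<beta> ^ 2) = w" using h p0 b by (simp add: field_simps)
      thus "p \<in> {p \<in> {p. p \<noteq> 0 \<and> p \<noteq> - a}. (p + a) ^ 2 / (p * \<beta> ^ 2) = w}" using p0 p1 by simp
    qed
    have disc: "(2 * a - w * \<beta> ^ 2) ^ 2 - 4 * a ^ 2 = (w * (w - 4 * \<gamma>)) * (\<beta> ^ 2) ^ 2"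
      unfolding a_def by (simp add: power2_eq_square algebra_simps)
    have "\<beta> ^ 2 \<noteq> 0" using b by simp
    show ?thesis
      unfolding a_def[symmetric] eq
      using card_quad_roots[OF two, of "2 * a - w * \<beta> ^ 2" "a ^ 2"] False
        quad_mult_sq[OF two \<open>\<beta> ^ 2 \<noteq> 0\<close>, of "w * (w - 4 * \<gamma>)"]
      by (simp add: disc)
  qed
qed


lemma sixteen_nz: "(2::'a::field) \<noteq> 0 \<Longrightarrow> (16::'a) \<noteq> 0"
proof -
  assume "(2::'a) \<noteq> 0"
  moreover have "(16::'a) = 2 * 2 * 2 * 2" by simp
  ultimately show ?thesis by (metis mult_eq_0_iff)
qed

lemma four_nz: "(2::'a::field) \<noteq> 0 \<Longrightarrow> (4::'a) \<noteq> 0"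
proof -
  assume "(2::'a) \<noteq> 0"
  moreover have "(4::'a) = 2 * 2" by simp
  ultimately show ?thesis by (metis mult_eq_0_iff)
qed

theorem proposition3p3:
  fixes \<psi> :: "'a::{finite,field} \<Rightarrow> complex" and \<beta> \<gamma> :: 'a
  assumes "odd CHAR('a)"
    and "nontrivial_additive_char \<psi>"
    and "\<gamma> \<noteq> 0"
  shows "M_sum \<psi> \<beta> \<gamma> =
    (if \<beta> = 0 then 1 else (kloosterman \<psi> (\<gamma> * \<beta> ^ 2)) ^ 2 - of_nat (card (UNIV::'a set)))"
proof -
  have two: "(2::'a) \<noteq> 0" using two_nz[OF assms(1)] .
  note nt = assms(2)
  have g: "\<gamma> \<noteq> 0" by fact
  have M1: "M_sum \<psi> \<beta> \<gamma> = (\<Sum>x\<in>UNIV. quad_char (x * (x + 16 * \<gamma>)) *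
       (\<Sum>z\<in>UNIV. quad_char (z ^ 2 + x) * \<psi> (\<beta> * z)))"
    unfolding M_sum_def by (simp add: quad_char_mult[OF two] sum_distrib_left mult.assoc add.commute)
  show ?thesis
  proof (cases "\<beta> = 0")
    case True
    have "M_sum \<psi> \<beta> \<gamma> = (\<Sum>x\<in>UNIV. - quad_char (x * (x + 16 * \<gamma>)))"
      unfolding M1
    proof (intro sum.cong refl)
      fix x :: 'a
      show "quad_char (x * (x + 16 * \<gamma>)) * (\<Sum>z\<in>UNIV. quad_char (z ^ 2 + x) * \<psi> (\<beta> * z))
          = - quad_char (x * (x + 16 * \<gamma>))"
      proof (cases "x = 0")
        case True thus ?thesis by (simp add: quad_char_def)
      next
        case False
        thus ?thesis using lemma5[OF two False] \<open>\<beta> = 0\<close> psi_props(1)[OF nt] by simp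
      qed
    qed
    also have "\<dots> = 1"
      using lemma4[OF two, of "16 * \<gamma>"] sixteen_nz[OF two] g by (simp add: sum_negf)
    finally show ?thesis using True by simp
  next
    case False
    hence b: "\<beta> \<noteq> 0" .
    define a where "a = \<gamma> * \<beta> ^ 2"
    have a: "a \<noteq> 0" using b g by (simp add: a_def)
    define G where "G = (\<lambda>w. \<Sum>z\<in>UNIV. quad_char (z ^ 2 - 4 * w) * \<psi> (\<beta> * z))"
    define q where "q = (of_nat (card (UNIV::'a set)) :: complex)"
    have four: "(4::'a) \<noteq> 0" using four_nz[OF two] .
    have M: "M_sum \<psi> \<beta> \<gamma> = (\<Sum>w\<in>UNIV. quad_char (w * (w - 4 * \<gamma>)) * G w)"
    proof -
      have m4: "(- 4 :: 'a) \<noteq> 0" using four by simp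
      have "M_sum \<psi> \<beta> \<gamma> = (\<Sum>w\<in>UNIV. quad_char ((- 4 * w) * ((- 4 * w) + 16 * \<gamma>)) *
          (\<Sum>z\<in>UNIV. quad_char (z ^ 2 + (- 4 * w)) * \<psi> (\<beta> * z)))"
        unfolding M1 using sum_scale[OF m4, of "\<lambda>x. quad_char (x * (x + 16 * \<gamma>)) *
          (\<Sum>z\<in>UNIV. quad_char (z ^ 2 + x) * \<psi> (\<beta> * z))"] by simp
      also have "\<dots> = (\<Sum>w\<in>UNIV. quad_char (w * (w - 4 * \<gamma>)) * G w)"
      proof (intro sum.cong refl)
        fix w :: 'a
        have "(- 4 * w) * ((- 4 * w) + 16 * \<gamma>) = (w * (w - 4 * \<gamma>)) * 4 ^ 2"
          by (simp add: algebra_simps power2_eq_square)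
        hence "quad_char ((- 4 * w) * ((- 4 * w) + 16 * \<gamma>)) = quad_char (w * (w - 4 * \<gamma>))"
          using quad_mult_sq[OF two four] by simp
        moreover have "(\<lambda>z. quad_char (z ^ 2 + (- 4 * w)) * \<psi> (\<beta> * z)) = (\<lambda>z. quad_char (z ^ 2 - 4 * w) * \<psi> (\<beta> * z))"
          by simp
        ultimately show "quad_char ((- 4 * w) * ((- 4 * w) + 16 * \<gamma>)) *
          (\<Sum>z\<in>UNIV. quad_char (z ^ 2 + (- 4 * w)) * \<psi> (\<beta> * z)) = quad_char (w * (w - 4 * \<gamma>)) * G w"
          unfolding G_def by simp
      qed
      finally show ?thesis .
    qed
    have sumG: "(\<Sum>w\<in>UNIV. G w) = 0"
    proof -
      have "(\<Sum>w\<in>UNIV. G w) = (\<Sum>z\<in>UNIV. \<psi> (\<beta> * z) * (\<Sum>w\<in>UNIV. quad_char (z ^ 2 - 4 * w)))"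
        unfolding G_def by (subst sum.swap) (simp add: sum_distrib_left mult.commute)
      also have "\<dots> = 0"
      proof (intro sum.neutral ballI)
        fix z :: 'a
        have m4: "(- 4 :: 'a) \<noteq> 0" using four by simp
        have "(\<Sum>w\<in>UNIV. quad_char (z ^ 2 - 4 * w)) = (\<Sum>w\<in>UNIV. quad_char (- 4 * w + z ^ 2))"
          by (simp add: algebra_simps)
        also have "\<dots> = (\<Sum>w\<in>UNIV. quad_char (w + z ^ 2))"
          using sum_scale[OF m4, of "\<lambda>w. quad_char (w + z ^ 2)"] by simp
        also have "\<dots> = 0" using sum_quad_shift[OF two] by simp
        finally show "\<psi> (\<beta> * z) * (\<Sum>w\<in>UNIV. quad_char (z ^ 2 - 4 * w)) = 0" by simp
      qed
      finally show ?thesis .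
    qed
    have G0: "G 0 = -1"
    proof -
      have "G 0 = (\<Sum>z\<in>UNIV. \<psi> (\<beta> * z) - (if z = 0 then 1 else 0))"
        unfolding G_def
      proof (intro sum.cong refl)
        fix z :: 'a
        show "quad_char (z ^ 2 - 4 * 0) * \<psi> (\<beta> * z) = \<psi> (\<beta> * z) - (if z = 0 then 1 else 0)"
          using quad_sq[of z] psi_props(1)[OF nt] by (cases "z = 0") (auto simp: quad_char_def)
      qed
      also have "\<dots> = -1" using sum_psi[OF nt, of \<beta>] b by (simp add: sum_subtractf)
      finally show ?thesis .
    qed
    define H where "H = (\<lambda>p. \<Sum>s\<in>UNIV. quad_char (s ^ 2 - 4 * p) * \<psi> (s * ((p + a) / p)))"
    define P where "P = {p::'a. p \<noteq> 0 \<and> p \<noteq> - a}"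
    have K: "(kloosterman \<psi> a) ^ 2 = q + (\<Sum>p\<in>{p::'a. p \<noteq> 0}. H p)"
      using kl_sq[OF two nt a] unfolding H_def q_def .
    have NZ: "{p::'a. p \<noteq> 0} = insert (- a) P" using a unfolding P_def by auto
    have "(\<Sum>p\<in>{p::'a. p \<noteq> 0}. H p) = H (- a) + (\<Sum>p\<in>P. H p)"
      unfolding NZ by (subst sum.insert) (auto simp: P_def)
    moreover have "H (- a) = -1"
    proof -
      have "H (- a) = (\<Sum>s\<in>UNIV. quad_char (s ^ 2 + 4 * a))"
        unfolding H_def using psi_props(1)[OF nt] by simp
      also have "\<dots> = -1" using lemma5[OF two, of "4 * a"] a four by simp
      finally show ?thesis .
    qed
    moreover have "(\<Sum>p\<in>P. H p) = (\<Sum>p\<in>P. G ((p + a) ^ 2 / (p * \<beta> ^ 2)))"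
    proof (intro sum.cong refl)
      fix p assume "p \<in> P"
      hence "p \<noteq> 0" "p \<noteq> - a" unfolding P_def by auto
      thus "H p = G ((p + a) ^ 2 / (p * \<beta> ^ 2))"
        unfolding H_def G_def using H_eq_G[OF two _ _ b, of p a \<psi>] by simp
    qed
    moreover have "(\<Sum>p\<in>P. G ((p + a) ^ 2 / (p * \<beta> ^ 2)))
        = (\<Sum>w\<in>UNIV. of_nat (card {p\<in>P. (p + a) ^ 2 / (p * \<beta> ^ 2) = w}) * G w)"
      by (rule sum_fiber_on) simp
    moreover have "\<dots> = (\<Sum>w\<in>UNIV. (G w + quad_char (w * (w - 4 * \<gamma>)) * G w) - (if w = 0 then G 0 else 0))"
    proof (intro sum.cong refl)
      fix w :: 'a
      show "of_nat (card {p\<in>P. (p + a) ^ 2 / (p * \<beta> ^ 2) = w}) * G w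
          = (G w + quad_char (w * (w - 4 * \<gamma>)) * G w) - (if w = 0 then G 0 else 0)"
        unfolding P_def a_def using P_card[OF two b g, of w]
        by (cases "w = 0") (auto simp: quad_char_def algebra_simps)
    qed
    moreover have "\<dots> = 0 + M_sum \<psi> \<beta> \<gamma> - G 0"
      by (simp add: sum_subtractf sum.distrib sumG M)
    ultimately have "(kloosterman \<psi> a) ^ 2 = q + (-1 + (0 + M_sum \<psi> \<beta> \<gamma> - G 0))"
      using K by simp
    hence "(kloosterman \<psi> a) ^ 2 = q + M_sum \<psi> \<beta> \<gamma>" using G0 by simp
    thus ?thesis using False unfolding a_def q_def by simp
  qed
qed

end
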